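(* For each integer $n\ge 3$ and each $Q\in\{Q_n(\mathscr{M}^{KI}_n),Q_n(\mathscr{M}^{KK}_n),Q_n(\mathscr{A}^{KK}_n),Q_n(\mathscr{H}^{KK}_n)\}$ we have $\alpha\text{-}\mathsf{tw}(Q)\le 2$ and $\alpha^{\ast}(Q)\le 3$.
   Context: Let $X^1,\dots,X^k$ be pairwise disjoint ordered sets $X^j=\{x^j_1,\dots,x^j_n\}$, and let $y^1,\dots,y^k,z^1,\dots,z^{k-1}$ be further distinct vertices. For ordered sets $X,Y$ of size $n$: the matching $\mathcal{M}(X,Y)$ has edges $x_iy_i$, the anti-matching $\mathcal{A}(X,Y)$ has edges $x_iy_j$ ($i\ne j$), the half-graph $\mathcal{H}(X,Y)$ has edges $x_iy_j$ ($i\le j$); $K(S)$ is the clique on $S$ and $K(S,T)$ the complete bipartite graph between $S$ and $T$; unions of graphs take the union of vertex and edge sets. Define $Q_k(\mathscr{M}^{KK}_n)=\bigcup_{i\in[k-1]}\mathcal{M}(X^i,X^{i+1})\cup\bigcup_{i\in[k]}K(\{y^i\}\cup X^i)$; $Q_k(\mathscr{M}^{KI}_n)=\bigcup_{i\in[k-1]}\mathcal{M}(X^i,X^{i+1})\cup\bigcup_{i\in[\lceil k/2\rceil]}K(\{y^{2i-1}\}\cup X^{2i-1})$; $Q_k(\mathscr{H}^{KK}_n)=\bigcup_{i\in[k-1]}\mathcal{H}(X^i,X^{i+1})\cup\bigcup_{i\in[k]}K(\{y^i\}\cup X^i)$; $Q_k(\mathscr{A}^{KK}_n)=\bigcup_{i\in[k-1]}\mathcal{A}(X^i,X^{i+1})\cup\bigcup_{i\in[k]}K(\{y^i\}\cup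 X^i)\cup\bigcup_{i\in[k-1]}K(\{z^i\},X^i\cup X^{i+1})$. $\alpha\text{-}\mathsf{tw}$ is the minimum over tree-decompositions of the maximum independence number of a bag, and $\alpha^{\ast}(G)=\max_v\alpha(G[N[v]])$. *)

theory Defs
  imports Main
begin

text \<open>A (simple) graph is a pair (vertex set, edge set), each edge a 2-element set.\<close>
type_synonym 'a graph = "'a set \<times> 'a set set"

definition gverts :: "'a graph \<Rightarrow> 'a set" where "gverts G = fst G"
definition gedges :: "'a graph \<Rightarrow> 'a set set" where "gedges G = snd G"

definition gunion :: "'a graph \<Rightarrow> 'a graph \<Rightarrow> 'a graph" where
  "gunion G H = (gverts G \<union> gverts H, gedges G \<union> gedges H)"

definition gUnion :: "'i set \<Rightarrow> ('i \<Rightarrow> 'a graph) \<Rightarrow> 'a graph" where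
  "gUnion I F = ((\<Union>i\<in>I. gverts (F i)), (\<Union>i\<in>I. gedges (F i)))"

text \<open>Ordered sets X = {x 1, ..., x n}, Y = {y 1, ..., y n} given by indexing functions.\<close>
definition matching_g :: "nat \<Rightarrow> (nat \<Rightarrow> 'a) \<Rightarrow> (nat \<Rightarrow> 'a) \<Rightarrow> 'a graph" where
  "matching_g n x y = (x ` {1..n} \<union> y ` {1..n},
     {{x i, y i} | i. i \<in> {1..n}})"

definition antimatching_g :: "nat \<Rightarrow> (nat \<Rightarrow> 'a) \<Rightarrow> (nat \<Rightarrow> 'a) \<Rightarrow> 'a graph" where
  "antimatching_g n x y = (x ` {1..n} \<union> y ` {1..n},
     {{x i, y j} | i j. i \<in> {1..n} \<and> j \<in> {1..n} \<and> i \<noteq> j})"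

definition halfgraph_g :: "nat \<Rightarrow> (nat \<Rightarrow> 'a) \<Rightarrow> (nat \<Rightarrow> 'a) \<Rightarrow> 'a graph" where
  "halfgraph_g n x y = (x ` {1..n} \<union> y ` {1..n},
     {{x i, y j} | i j. i \<in> {1..n} \<and> j \<in> {1..n} \<and> i \<le> j})"

definition clique_g :: "'a set \<Rightarrow> 'a graph" where
  "clique_g S = (S, {{u, v} | u v. u \<in> S \<and> v \<in> S \<and> u \<noteq> v})"

definition cbip_g :: "'a set \<Rightarrow> 'a set \<Rightarrow> 'a graph" where
  "cbip_g S T = (S \<union> T, {{s, t} | s t. s \<in> S \<and> t \<in> T \<and> s \<noteq> t})"

text \<open>Vertices: XV j i = x^j_i, YV j = y^j, ZV j = z^j.\<close>
datatype qv = XV nat nat | YV nat | ZV nat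

definition Xset :: "nat \<Rightarrow> nat \<Rightarrow> qv set" where
  "Xset n j = XV j ` {1..n}"

definition Q_MKK :: "nat \<Rightarrow> nat \<Rightarrow> qv graph" where
  "Q_MKK k n = gunion
     (gUnion {1..k-1} (\<lambda>i. matching_g n (XV i) (XV (i+1))))
     (gUnion {1..k} (\<lambda>i. clique_g (insert (YV i) (Xset n i))))"

definition Q_MKI :: "nat \<Rightarrow> nat \<Rightarrow> qv graph" where
  "Q_MKI k n = gunion
     (gUnion {1..k-1} (\<lambda>i. matching_g n (XV i) (XV (i+1))))
     (gUnion {1..(k+1) div 2} (\<lambda>i. clique_g (insert (YV (2*i-1)) (Xset n (2*i-1)))))"

definition Q_HKK :: "nat \<Rightarrow> nat \<Rightarrow> qv graph" where
  "Q_HKK k n = gunion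
     (gUnion {1..k-1} (\<lambda>i. halfgraph_g n (XV i) (XV (i+1))))
     (gUnion {1..k} (\<lambda>i. clique_g (insert (YV i) (Xset n i))))"

definition Q_AKK :: "nat \<Rightarrow> nat \<Rightarrow> qv graph" where
  "Q_AKK k n = gunion (gunion
     (gUnion {1..k-1} (\<lambda>i. antimatching_g n (XV i) (XV (i+1))))
     (gUnion {1..k} (\<lambda>i. clique_g (insert (YV i) (Xset n i)))))
     (gUnion {1..k-1} (\<lambda>i. cbip_g {ZV i} (Xset n i \<union> Xset n (i+1))))"

definition indep :: "'a graph \<Rightarrow> 'a set \<Rightarrow> bool" where
  "indep G I = (\<forall>u\<in>I. \<forall>v\<in>I. {u, v} \<notin> gedges G)"

definition alpha_on :: "'a graph \<Rightarrow> 'a set \<Rightarrow> nat" where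
  "alpha_on G S = Max {card I | I. I \<subseteq> S \<and> indep G I}"

definition closed_nbhd :: "'a graph \<Rightarrow> 'a \<Rightarrow> 'a set" where
  "closed_nbhd G v = insert v {u \<in> gverts G. {u, v} \<in> gedges G}"

definition alpha_star :: "'a graph \<Rightarrow> nat" where
  "alpha_star G = Max ((\<lambda>v. alpha_on G (closed_nbhd G v)) ` gverts G)"

definition connected_on :: "nat set \<Rightarrow> nat set set \<Rightarrow> bool" where
  "connected_on S E = (\<forall>a\<in>S. \<forall>b\<in>S.
      (a, b) \<in> {(u, v). u \<in> S \<and> v \<in> S \<and> {u, v} \<in> E}\<^sup>*)"

definition is_tree :: "nat set \<Rightarrow> nat set set \<Rightarrow> bool" where
  "is_tree N E = (finite N \<and> N \<noteq> {} \<and>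
     (\<forall>e\<in>E. \<exists>a b. e = {a, b} \<and> a \<noteq> b \<and> a \<in> N \<and> b \<in> N) \<and>
     connected_on N E \<and> card E + 1 = card N)"

definition tree_decomp :: "'a graph \<Rightarrow> nat set \<Rightarrow> nat set set \<Rightarrow> (nat \<Rightarrow> 'a set) \<Rightarrow> bool" where
  "tree_decomp G N E B = (is_tree N E \<and>
     (\<forall>t\<in>N. B t \<subseteq> gverts G) \<and>
     (\<forall>v\<in>gverts G. \<exists>t\<in>N. v \<in> B t) \<and>
     (\<forall>e\<in>gedges G. \<exists>t\<in>N. e \<subseteq> B t) \<and>
     (\<forall>v\<in>gverts G. connected_on {t \<in> N. v \<in> B t} E))"

definition alpha_tw :: "'a graph \<Rightarrow> nat" where
  "alpha_tw G = (LEAST k. \<exists>N E B. tree_decomp G N E B \<and> (\<forall>t\<in>N. alpha_on G (B t) \<le> k))"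

end

theory Submission
  imports Defs
begin


definition cliq :: "'a graph \<Rightarrow> 'a set \<Rightarrow> bool" where
 "cliq G A = (\<forall>u\<in>A. \<forall>v\<in>A. u \<noteq> v \<longrightarrow> {u,v} \<in> gedges G)"

lemma cliq_indep: "cliq G A \<Longrightarrow> indep G I \<Longrightarrow> card (I \<inter> A) \<le> 1"
proof -
  assume a: "cliq G A" "indep G I"
  have "\<forall>x\<in>I\<inter>A. \<forall>y\<in>I\<inter>A. x = y" using a unfolding cliq_def indep_def by blast
  then show ?thesis
    by (cases "finite (I \<inter> A)") (auto simp: card_le_Suc0_iff_eq)
qed

lemma card_le3:
  assumes "I \<subseteq> A \<union> B \<union> C" "cliq G A" "cliq G B" "cliq G C" "indep G I"
  shows "card I \<le> 3"
proof -
  have e: "I = (I\<inter>A) \<union> (I\<inter>B) \<union> (I\<inter>C)" using assms(1) by blast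
  have "card I \<le> card (I\<inter>A) + card (I\<inter>B) + card (I\<inter>C)"
  proof -
    have "card I \<le> card ((I\<inter>A) \<union> (I\<inter>B)) + card (I\<inter>C)"
      using e card_Un_le by metis
    moreover have "card ((I\<inter>A) \<union> (I\<inter>B)) \<le> card (I\<inter>A) + card (I\<inter>B)"
      by (rule card_Un_le)
    ultimately show ?thesis by linarith
  qed
  moreover have "card (I\<inter>A) \<le> 1" "card (I\<inter>B) \<le> 1" "card (I\<inter>C) \<le> 1"
    using assms cliq_indep by blast+
  ultimately show ?thesis by linarith
qed

lemma card_le2:
  assumes "I \<subseteq> A \<union> B" "cliq G A" "cliq G B" "indep G I"
  shows "card I \<le> 2"
proof -
  have e: "I = (I\<inter>A) \<union> (I\<inter>B)" using assms(1) by blast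
  have "card I \<le> card (I\<inter>A) + card (I\<inter>B)"
    by (metis e card_Un_le)
  moreover have "card (I\<inter>A) \<le> 1" "card (I\<inter>B) \<le> 1"
    using assms cliq_indep by blast+
  ultimately show ?thesis by linarith
qed

lemma alpha_on_le:
  assumes "\<And>I. I \<subseteq> S \<Longrightarrow> indep G I \<Longrightarrow> card I \<le> c"
  shows "alpha_on G S \<le> c"
proof -
  let ?M = "{card I | I. I \<subseteq> S \<and> indep G I}"
  have "?M \<subseteq> {..c}" using assms by auto
  hence f: "finite ?M" using finite_subset by blast
  have "0 \<in> ?M" by (rule CollectI, rule exI[of _ "{}"]) (auto simp: indep_def)
  hence "?M \<noteq> {}" by blast
  with f show ?thesis unfolding alpha_on_def using assms by (auto simp: Max_le_iff)
qed

lemma cliq_sing[simp]: "cliq G {x}" by (simp add: cliq_def)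
lemma cliq_empty[simp]: "cliq G {}" by (simp add: cliq_def)

definition ptE :: "nat set \<Rightarrow> (nat \<Rightarrow> nat) \<Rightarrow> nat set set" where
  "ptE N p = (\<lambda>t. {t, p t}) ` (N - {0})"

lemma psub:
  assumes par: "\<And>t. t \<in> N \<Longrightarrow> t \<noteq> 0 \<Longrightarrow> p t \<in> N \<and> p t < t"
    and r: "r \<in> N" "P r"
    and st: "\<And>t. t \<in> N \<Longrightarrow> P t \<Longrightarrow> t \<noteq> r \<Longrightarrow> t \<noteq> 0 \<and> P (p t)"
  shows "connected_on {t\<in>N. P t} (ptE N p)"
proof -
  let ?S = "{t\<in>N. P t}"
  let ?R = "{(u, v). u \<in> ?S \<and> v \<in> ?S \<and> {u, v} \<in> ptE N p}"
  have toR: "\<forall>t. t \<in> ?S \<longrightarrow> (t, r) \<in> ?R\<^sup>*" 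
  proof (rule allI, induct_tac t rule: less_induct)
    fix t assume IH: "\<And>y. y < t \<Longrightarrow> y \<in> ?S \<longrightarrow> (y, r) \<in> ?R\<^sup>*"
    show "t \<in> ?S \<longrightarrow> (t, r) \<in> ?R\<^sup>*"
    proof
      assume t: "t \<in> ?S"
      show "(t, r) \<in> ?R\<^sup>*"
      proof (cases "t = r")
        case True then show ?thesis by simp
      next
        case False
        with st t have h: "t \<noteq> 0" "P (p t)" by auto
        with par t have h2: "p t \<in> N" "p t < t" by auto
        have "(t, p t) \<in> ?R" using t h h2 by (auto simp: ptE_def)
        moreover have "(p t, r) \<in> ?R\<^sup>*" using IH h h2 by auto
        ultimately show ?thesis by (rule converse_rtrancl_into_rtrancl)
      qed
    qed
  qed
  have sym: "?R\<inverse> = ?R" by (auto simp: insert_commute)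
  show ?thesis unfolding connected_on_def
  proof (intro ballI)
    fix a b assume a: "a \<in> ?S" and b: "b \<in> ?S"
    have "(a, r) \<in> ?R\<^sup>*" using toR a by blast
    moreover have "(r, b) \<in> ?R\<^sup>*"
    proof -
      have "(b, r) \<in> ?R\<^sup>*" using toR b by blast
      hence "(r, b) \<in> (?R\<inverse>)\<^sup>*" by (rule rtrancl_converseI)
      thus ?thesis using sym by simp
    qed
    ultimately show "(a, b) \<in> ?R\<^sup>*" by (rule rtrancl_trans)
  qed
qed

lemma ptree:
  assumes fin: "finite N" and z: "0 \<in> N"
    and par: "\<And>t. t \<in> N \<Longrightarrow> t \<noteq> 0 \<Longrightarrow> p t \<in> N \<and> p t < t"
  shows "is_tree N (ptE N p)"
proof -
  have inj: "inj_on (\<lambda>t. {t, p t}) (N - {0})"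
  proof (rule inj_onI)
    fix x y assume x: "x \<in> N - {0}" and y: "y \<in> N - {0}" and e: "{x, p x} = {y, p y}"
    have "p x < x" "p y < y" using par x y by auto
    with e show "x = y" by (auto simp: doubleton_eq_iff)
  qed
  have c: "card (ptE N p) = card (N - {0})" unfolding ptE_def using card_image[OF inj] .
  have "card (N - {0}) + 1 = card N" using fin z
    by (metis Suc_eq_plus1 card_Suc_Diff1)
  moreover have "connected_on N (ptE N p)"
    using psub[OF par z, of "\<lambda>_. True"] by simp
  moreover have "\<forall>e\<in>ptE N p. \<exists>a b. e = {a, b} \<and> a \<noteq> b \<and> a \<in> N \<and> b \<in> N"
    unfolding ptE_def using par by fastforce
  ultimately show ?thesis unfolding is_tree_def using fin z c by auto
qed




fun GA :: "nat \<Rightarrow> nat \<Rightarrow> (nat \<Rightarrow> nat \<Rightarrow> bool) \<Rightarrow> (nat \<Rightarrow> bool) \<Rightarrow> bool \<Rightarrow> qv \<Rightarrow> qv \<Rightarrow> bool" where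
  "GA k n R cl zf (XV i a) (XV i' b) = (i \<in> {1..k} \<and> i' \<in> {1..k} \<and> a \<in> {1..n} \<and> b \<in> {1..n} \<and>
      ((i = i' \<and> a \<noteq> b \<and> cl i) \<or> (i' = i+1 \<and> R a b) \<or> (i = i'+1 \<and> R b a)))"
| "GA k n R cl zf (XV i a) (YV i') = (i' = i \<and> cl i \<and> i \<in> {1..k} \<and> a \<in> {1..n})"
| "GA k n R cl zf (YV i') (XV i a) = (i' = i \<and> cl i \<and> i \<in> {1..k} \<and> a \<in> {1..n})"
| "GA k n R cl zf (XV i a) (ZV i') = (zf \<and> i' \<in> {1..k-1} \<and> (i = i' \<or> i = i'+1) \<and> a \<in> {1..n})"
| "GA k n R cl zf (ZV i') (XV i a) = (zf \<and> i' \<in> {1..k-1} \<and> (i = i' \<or> i = i'+1) \<and> a \<in> {1..n})"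
| "GA k n R cl zf (YV i) (YV j) = False"
| "GA k n R cl zf (YV i) (ZV j) = False"
| "GA k n R cl zf (ZV i) (YV j) = False"
| "GA k n R cl zf (ZV i) (ZV j) = False"

fun GV :: "nat \<Rightarrow> nat \<Rightarrow> (nat \<Rightarrow> bool) \<Rightarrow> bool \<Rightarrow> qv \<Rightarrow> bool" where
  "GV k n cl zf (XV i a) = (i \<in> {1..k} \<and> a \<in> {1..n})"
| "GV k n cl zf (YV i) = (i \<in> {1..k} \<and> cl i)"
| "GV k n cl zf (ZV i) = (zf \<and> i \<in> {1..k-1})"

lemma XV_img[simp]: "XV i a \<in> XV j ` A \<longleftrightarrow> i = j \<and> a \<in> A" by auto
lemma YV_img[simp]: "YV i \<notin> XV j ` A" "ZV i \<notin> XV j ` A" by auto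

lemma Xset_mem[simp]: "v \<in> Xset n j \<longleftrightarrow> (\<exists>a. v = XV j a \<and> a \<in> {1..n})"
  by (auto simp: Xset_def)

lemma GAI: "GA k n R cl zf u v \<Longrightarrow> \<exists>u' v'. {u,v} = {u',v'} \<and> GA k n R cl zf u' v'"
  by blast


lemma MKK_m: "i \<in> {1..k-1} \<Longrightarrow> a \<in> {1..n} \<Longrightarrow> {XV i a, XV (Suc i) a} \<in> gedges (Q_MKK k n)"
  unfolding Q_MKK_def gunion_def gUnion_def gedges_def matching_g_def by auto
lemma MKK_m': "i \<in> {1..k-1} \<Longrightarrow> a \<in> {1..n} \<Longrightarrow> {XV (Suc i) a, XV i a} \<in> gedges (Q_MKK k n)"
  using MKK_m by (metis insert_commute)
lemma MKK_c: "i \<in> {1..k} \<Longrightarrow> u \<in> insert (YV i) (Xset n i) \<Longrightarrow> v \<in> insert (YV i) (Xset n i) \<Longrightarrow> u \<noteq> v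
   \<Longrightarrow> {u,v} \<in> gedges (Q_MKK k n)"
  unfolding Q_MKK_def gunion_def gUnion_def gedges_def clique_g_def by (simp only: snd_conv) blast

lemma MKK_E: "gedges (Q_MKK k n) = {{u,v} | u v. GA k n (=) (\<lambda>_. True) False u v}"
proof (rule set_eqI, rule iffI)
  fix e assume "e \<in> gedges (Q_MKK k n)"
  then show "e \<in> {{u,v} | u v. GA k n (=) (\<lambda>_. True) False u v}"
    unfolding Q_MKK_def gunion_def gUnion_def gedges_def matching_g_def clique_g_def
    by (auto intro!: GAI)
next
  fix e assume "e \<in> {{u,v} | u v. GA k n (=) (\<lambda>_. True) False u v}"
  then obtain u v where e: "e = {u,v}" and g: "GA k n (=) (\<lambda>_. True) False u v" by blast
  show "e \<in> gedges (Q_MKK k n)"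
    using g unfolding e
    apply (cases u; cases v)
    apply (auto intro: MKK_m MKK_m' MKK_c)
    done
qed


lemma MKK_V: "gverts (Q_MKK k n) = {v. GV k n (\<lambda>_. True) False v}"
  unfolding Q_MKK_def gunion_def gUnion_def gverts_def matching_g_def clique_g_def
  apply (rule set_eqI) apply (case_tac x) apply (auto simp: Xset_def)
  done

lemma HKK_m: assumes "i \<in> {1..k-1}" "a \<in> {1..n}" "b \<in> {1..n}" "a \<le> b"
  shows "{XV i a, XV (Suc i) b} \<in> gedges (Q_HKK k n)"
proof -
  have "{XV i a, XV (Suc i) b} \<in> gedges (halfgraph_g n (XV i) (XV (i+1)))"
    unfolding halfgraph_g_def gedges_def snd_conv using assms
    by (intro CollectI exI[of _ a] exI[of _ b]) auto
  thus ?thesis using assms unfolding Q_HKK_def gunion_def gUnion_def gedges_def by (simp only: snd_conv) blast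
qed
lemma HKK_m': "i \<in> {1..k-1} \<Longrightarrow> a \<in> {1..n} \<Longrightarrow> b \<in> {1..n} \<Longrightarrow> a \<le> b \<Longrightarrow> {XV (Suc i) b, XV i a} \<in> gedges (Q_HKK k n)"
  by (metis HKK_m insert_commute)
lemma HKK_c: "i \<in> {1..k} \<Longrightarrow> u \<in> insert (YV i) (Xset n i) \<Longrightarrow> v \<in> insert (YV i) (Xset n i) \<Longrightarrow> u \<noteq> v
   \<Longrightarrow> {u,v} \<in> gedges (Q_HKK k n)"
  unfolding Q_HKK_def gunion_def gUnion_def gedges_def clique_g_def by (simp only: snd_conv) blast

lemma HKK_xx: assumes g: "GA k n (\<le>) (\<lambda>_. True) False (XV i a) (XV i' b)"
  shows "{XV i a, XV i' b} \<in> gedges (Q_HKK k n)"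
proof -
  have r: "i \<in> {1..k}" "i' \<in> {1..k}" "a \<in> {1..n}" "b \<in> {1..n}" using g by auto
  have "(i = i' \<and> a \<noteq> b) \<or> (i' = i+1 \<and> (\<le>) a b) \<or> (i = i'+1 \<and> (\<le>) b a)" using g by simp
  then consider "i = i'" "a \<noteq> b" | "i' = i+1" "(\<le>) a b" | "i = i'+1" "(\<le>) b a" by blast
  then show ?thesis
  proof cases
    case 1 show ?thesis by (rule HKK_c[of i]) (use r 1 in auto)
  next
    case 2 show ?thesis using HKK_m[of i k a n b] r 2 by simp
  next
    case 3 show ?thesis using HKK_m'[of i' k b n a] r 3 by simp
  qed
qed
lemma HKK_xy: assumes g: "GA k n (\<le>) (\<lambda>_. True) False (XV i a) (YV i')"
  shows "{XV i a, YV i'} \<in> gedges (Q_HKK k n)"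
  by (rule HKK_c[of i]) (use g in auto)
lemma HKK_yx: assumes g: "GA k n (\<le>) (\<lambda>_. True) False (YV i') (XV i a)"
  shows "{YV i', XV i a} \<in> gedges (Q_HKK k n)"
  by (rule HKK_c[of i]) (use g in auto)
lemma HKK_back: "GA k n (\<le>) (\<lambda>_. True) False u v \<Longrightarrow> {u,v} \<in> gedges (Q_HKK k n)"
  by (induct u; induct v; (erule HKK_xx | erule HKK_xy | erule HKK_yx | simp))

lemma HKK_E: "gedges (Q_HKK k n) = {{u,v} | u v. GA k n (\<le>) (\<lambda>_. True) False u v}"
proof (rule set_eqI, rule iffI)
  fix e assume "e \<in> gedges (Q_HKK k n)"
  then show "e \<in> {{u,v} | u v. GA k n (\<le>) (\<lambda>_. True) False u v}"
    unfolding Q_HKK_def gunion_def gUnion_def gedges_def halfgraph_g_def clique_g_def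
    by (auto intro!: GAI)
next
  fix e assume "e \<in> {{u,v} | u v. GA k n (\<le>) (\<lambda>_. True) False u v}"
  then obtain u v where e: "e = {u,v}" and g: "GA k n (\<le>) (\<lambda>_. True) False u v" by blast
  show "e \<in> gedges (Q_HKK k n)"
    using HKK_back[OF g] unfolding e .
qed

lemma HKK_V: "gverts (Q_HKK k n) = {v. GV k n (\<lambda>_. True) False v}"
  unfolding Q_HKK_def gunion_def gUnion_def gverts_def halfgraph_g_def clique_g_def
  apply (rule set_eqI) apply (case_tac x) apply (auto simp: Xset_def)
  done

lemma AKK_m: assumes "i \<in> {1..k-1}" "a \<in> {1..n}" "b \<in> {1..n}" "a \<noteq> b"
  shows "{XV i a, XV (Suc i) b} \<in> gedges (Q_AKK k n)"
proof -
  have "{XV i a, XV (Suc i) b} \<in> gedges (antimatching_g n (XV i) (XV (i+1)))"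
    unfolding antimatching_g_def gedges_def snd_conv using assms
    by (intro CollectI exI[of _ a] exI[of _ b]) auto
  thus ?thesis using assms unfolding Q_AKK_def gunion_def gUnion_def gedges_def by (simp only: snd_conv) blast
qed
lemma AKK_m': "i \<in> {1..k-1} \<Longrightarrow> a \<in> {1..n} \<Longrightarrow> b \<in> {1..n} \<Longrightarrow> a \<noteq> b \<Longrightarrow> {XV (Suc i) b, XV i a} \<in> gedges (Q_AKK k n)"
  by (metis AKK_m insert_commute)
lemma AKK_c: "i \<in> {1..k} \<Longrightarrow> u \<in> insert (YV i) (Xset n i) \<Longrightarrow> v \<in> insert (YV i) (Xset n i) \<Longrightarrow> u \<noteq> v
   \<Longrightarrow> {u,v} \<in> gedges (Q_AKK k n)"
  unfolding Q_AKK_def gunion_def gUnion_def gedges_def clique_g_def by (simp only: snd_conv) blast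
lemma AKK_z: "i \<in> {1..k-1} \<Longrightarrow> v \<in> Xset n i \<union> Xset n (Suc i) \<Longrightarrow> {ZV i, v} \<in> gedges (Q_AKK k n)"
proof -
  assume a: "i \<in> {1..k-1}" "v \<in> Xset n i \<union> Xset n (Suc i)"
  have "{ZV i, v} \<in> gedges (cbip_g {ZV i} (Xset n i \<union> Xset n (i+1)))"
    using a unfolding cbip_g_def gedges_def by auto
  thus ?thesis using a
  unfolding Q_AKK_def gunion_def gUnion_def gedges_def by (simp only: snd_conv) blast
qed
lemma AKK_z': "i \<in> {1..k-1} \<Longrightarrow> v \<in> Xset n i \<union> Xset n (Suc i) \<Longrightarrow> {v, ZV i} \<in> gedges (Q_AKK k n)"
  using AKK_z by (metis insert_commute)

lemma AKK_xx: assumes g: "GA k n (\<noteq>) (\<lambda>_. True) True (XV i a) (XV i' b)"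
  shows "{XV i a, XV i' b} \<in> gedges (Q_AKK k n)"
proof -
  have r: "i \<in> {1..k}" "i' \<in> {1..k}" "a \<in> {1..n}" "b \<in> {1..n}" using g by auto
  have "(i = i' \<and> a \<noteq> b) \<or> (i' = i+1 \<and> (\<noteq>) a b) \<or> (i = i'+1 \<and> (\<noteq>) b a)" using g by simp
  then consider "i = i'" "a \<noteq> b" | "i' = i+1" "(\<noteq>) a b" | "i = i'+1" "(\<noteq>) b a" by blast
  then show ?thesis
  proof cases
    case 1 show ?thesis by (rule AKK_c[of i]) (use r 1 in auto)
  next
    case 2 show ?thesis using AKK_m[of i k a n b] r 2 by simp
  next
    case 3 show ?thesis using AKK_m'[of i' k b n a] r 3 by simp
  qed
qed
lemma AKK_xy: assumes g: "GA k n (\<noteq>) (\<lambda>_. True) True (XV i a) (YV i')"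
  shows "{XV i a, YV i'} \<in> gedges (Q_AKK k n)"
  by (rule AKK_c[of i]) (use g in auto)
lemma AKK_yx: assumes g: "GA k n (\<noteq>) (\<lambda>_. True) True (YV i') (XV i a)"
  shows "{YV i', XV i a} \<in> gedges (Q_AKK k n)"
  by (rule AKK_c[of i]) (use g in auto)
lemma AKK_xz: assumes g: "GA k n (\<noteq>) (\<lambda>_. True) True (XV i a) (ZV i')"
  shows "{XV i a, ZV i'} \<in> gedges (Q_AKK k n)"
  by (rule AKK_z'[of i']) (use g in auto)
lemma AKK_zx: assumes g: "GA k n (\<noteq>) (\<lambda>_. True) True (ZV i') (XV i a)"
  shows "{ZV i', XV i a} \<in> gedges (Q_AKK k n)"
  by (rule AKK_z[of i']) (use g in auto)
lemma AKK_back: "GA k n (\<noteq>) (\<lambda>_. True) True u v \<Longrightarrow> {u,v} \<in> gedges (Q_AKK k n)"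
  by (induct u; induct v; (erule AKK_xx | erule AKK_xy | erule AKK_yx | erule AKK_xz | erule AKK_zx | simp))

lemma AKK_E: "gedges (Q_AKK k n) = {{u,v} | u v. GA k n (\<noteq>) (\<lambda>_. True) True u v}"
proof (rule set_eqI, rule iffI)
  fix e assume "e \<in> gedges (Q_AKK k n)"
  then show "e \<in> {{u,v} | u v. GA k n (\<noteq>) (\<lambda>_. True) True u v}"
    unfolding Q_AKK_def gunion_def gUnion_def gedges_def antimatching_g_def clique_g_def cbip_g_def
    by (auto intro!: GAI)
next
  fix e assume "e \<in> {{u,v} | u v. GA k n (\<noteq>) (\<lambda>_. True) True u v}"
  then obtain u v where e: "e = {u,v}" and g: "GA k n (\<noteq>) (\<lambda>_. True) True u v" by blast
  show "e \<in> gedges (Q_AKK k n)"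
    using AKK_back[OF g] unfolding e .
qed

lemma AKK_V: "gverts (Q_AKK k n) = {v. GV k n (\<lambda>_. True) True v}"
  unfolding Q_AKK_def gunion_def gUnion_def gverts_def antimatching_g_def clique_g_def cbip_g_def
  apply (rule set_eqI) apply (case_tac x) apply (auto simp: Xset_def)
  done

lemma odd_idx: "(i::nat) \<in> {1..k} \<Longrightarrow> odd i \<Longrightarrow> (i+1) div 2 \<in> {1..(k+1) div 2} \<and> i = 2*((i+1) div 2) - 1"
  by auto presburger+

lemma MKI_m: "i \<in> {1..k-1} \<Longrightarrow> a \<in> {1..n} \<Longrightarrow> {XV i a, XV (Suc i) a} \<in> gedges (Q_MKI k n)"
  unfolding Q_MKI_def gunion_def gUnion_def gedges_def matching_g_def by auto
lemma MKI_m': "i \<in> {1..k-1} \<Longrightarrow> a \<in> {1..n} \<Longrightarrow> {XV (Suc i) a, XV i a} \<in> gedges (Q_MKI k n)"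
  using MKI_m by (metis insert_commute)
lemma MKI_c: assumes "i \<in> {1..k}" "odd i" "u \<in> insert (YV i) (Xset n i)" "v \<in> insert (YV i) (Xset n i)" "u \<noteq> v"
   shows "{u,v} \<in> gedges (Q_MKI k n)"
proof -
  obtain j where j: "j \<in> {1..(k+1) div 2}" "i = 2*j-1" using odd_idx[OF assms(1,2)] by blast
  show ?thesis
  unfolding Q_MKI_def gunion_def gUnion_def gedges_def clique_g_def
    apply (simp only: snd_conv)
    apply (rule UnI2)
    apply (rule UN_I[OF j(1)])
    using assms j by blast
qed

lemma MKI_xx: assumes g: "GA k n (=) odd False (XV i a) (XV i' b)"
  shows "{XV i a, XV i' b} \<in> gedges (Q_MKI k n)"
proof -
  have r: "i \<in> {1..k}" "i' \<in> {1..k}" "a \<in> {1..n}" "b \<in> {1..n}" using g by auto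
  have "(i = i' \<and> a \<noteq> b \<and> odd i) \<or> (i' = i+1 \<and> a = b) \<or> (i = i'+1 \<and> b = a)" using g by simp
  then consider "i = i'" "a \<noteq> b" "odd i" | "i' = i+1" "a = b" | "i = i'+1" "b = a" by blast
  then show ?thesis
  proof cases
    case 1 show ?thesis by (rule MKI_c[of i]) (use r 1 in auto)
  next
    case 2 show ?thesis using MKI_m[of i k a n] r 2 by simp
  next
    case 3 show ?thesis using MKI_m'[of i' k a n] r 3 by simp
  qed
qed
lemma MKI_xy: assumes g: "GA k n (=) odd False (XV i a) (YV i')"
  shows "{XV i a, YV i'} \<in> gedges (Q_MKI k n)"
  by (rule MKI_c[of i]) (use g in auto)
lemma MKI_yx: assumes g: "GA k n (=) odd False (YV i') (XV i a)"
  shows "{YV i', XV i a} \<in> gedges (Q_MKI k n)"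
  by (rule MKI_c[of i]) (use g in auto)

lemma MKI_back: "GA k n (=) odd False u v \<Longrightarrow> {u,v} \<in> gedges (Q_MKI k n)"
  by (induct u; induct v; (erule MKI_xx | erule MKI_xy | erule MKI_yx | simp))

lemma MKI_E: "gedges (Q_MKI k n) = {{u,v} | u v. GA k n (=) odd False u v}"
proof (rule set_eqI, rule iffI)
  fix e assume "e \<in> gedges (Q_MKI k n)"
  then show "e \<in> {{u,v} | u v. GA k n (=) odd False u v}"
    unfolding Q_MKI_def gunion_def gUnion_def gedges_def matching_g_def clique_g_def
    by (auto intro!: GAI)
next
  fix e assume "e \<in> {{u,v} | u v. GA k n (=) odd False u v}"
  then obtain u v where e: "e = {u,v}" and g: "GA k n (=) odd False u v" by blast
  show "e \<in> gedges (Q_MKI k n)"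
    using MKI_back[OF g] unfolding e .
qed

lemma MKI_V: "k \<ge> 2 \<Longrightarrow> gverts (Q_MKI k n) = {v. GV k n odd False v}"
  unfolding Q_MKI_def gunion_def gUnion_def gverts_def matching_g_def clique_g_def
  apply (rule set_eqI) apply (case_tac x) apply (auto simp: Xset_def)
   subgoal for x11 x12 by (erule ballE[where x="min x11 (k-1)"]) (auto simp: min_def split: if_splits)
  using odd_idx by (metis Suc_eq_plus1 One_nat_def atLeastAtMost_iff)




lemma GA_symI: "GA k n R cl zf u v \<Longrightarrow> GA k n R cl zf v u"
  by (induct u; induct v) (simp only: GA.simps; blast)+
lemma GA_sym: "GA k n R cl zf u v = GA k n R cl zf v u"
  using GA_symI by blast

lemma edge_iff:
  assumes E: "gedges G = {{u,v}|u v. GA k n R cl zf u v}"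
  shows "{u,v} \<in> gedges G \<longleftrightarrow> GA k n R cl zf u v"
proof
  assume "{u,v} \<in> gedges G"
  then obtain u' v' where "{u,v} = {u',v'}" "GA k n R cl zf u' v'" using E by blast
  then show "GA k n R cl zf u v" using GA_sym by (metis doubleton_eq_iff)
qed (use E in blast)

lemma nbhd_sub:
  assumes E: "gedges G = {{u,v}|u v. GA k n R cl zf u v}"
  shows "u \<in> closed_nbhd G v \<Longrightarrow> u = v \<or> GA k n R cl zf u v"
  unfolding closed_nbhd_def using edge_iff[OF E] by blast

lemma cliqI:
  assumes E: "gedges G = {{u,v}|u v. GA k n R cl zf u v}"
    and "\<And>u v. u \<in> A \<Longrightarrow> v \<in> A \<Longrightarrow> u \<noteq> v \<Longrightarrow> GA k n R cl zf u v"
  shows "cliq G A"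
  unfolding cliq_def edge_iff[OF E] using assms(2) by blast

lemma astar_gen:
  assumes V: "gverts G = Collect (GV k n cl zf)" and ne: "gverts G \<noteq> {}"
    and loc: "\<And>v. GV k n cl zf v \<Longrightarrow> \<exists>A B C. closed_nbhd G v \<subseteq> A \<union> B \<union> C \<and> cliq G A \<and> cliq G B \<and> cliq G C"
  shows "alpha_star G \<le> 3"
proof -
  have b: "\<forall>v\<in>gverts G. alpha_on G (closed_nbhd G v) \<le> 3"
  proof
    fix v assume "v \<in> gverts G"
    hence "GV k n cl zf v" using V by simp
    then obtain A B C where h: "closed_nbhd G v \<subseteq> A \<union> B \<union> C" "cliq G A" "cliq G B" "cliq G C"
      using loc by meson
    show "alpha_on G (closed_nbhd G v) \<le> 3"
    proof (rule alpha_on_le)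
      fix I assume "I \<subseteq> closed_nbhd G v" "indep G I"
      then show "card I \<le> 3" using card_le3[of I A B C G] h subset_trans by metis
    qed
  qed
  let ?M = "(\<lambda>v. alpha_on G (closed_nbhd G v)) ` gverts G"
  have s: "?M \<subseteq> {..3}" using b by blast
  have f: "finite ?M" using finite_subset[OF s] by blast
  have n: "?M \<noteq> {}" using ne by blast
  have "Max ?M \<le> 3" using Max_le_iff[OF f n] s by blast
  thus ?thesis unfolding alpha_star_def .
qed

definition Xc :: "nat \<Rightarrow> nat \<Rightarrow> nat \<Rightarrow> qv set" where
  "Xc k n j = (if j \<in> {1..k} then Xset n j else {})"
definition Zs :: "nat \<Rightarrow> bool \<Rightarrow> nat \<Rightarrow> qv set" where
  "Zs k zf j = (if zf \<and> j \<in> {1..k-1} then {ZV j} else {})"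

lemma nbA_X: "GA k n R (\<lambda>_. True) zf u (XV i a) \<Longrightarrow>
   u \<in> insert (YV i) (Xset n i) \<union> (Xc k n (i-1) \<union> Zs k zf (i-1)) \<union> (Xc k n (i+1) \<union> Zs k zf i)"
  by (induct u) (auto simp: Xc_def Zs_def)
lemma nbA_Y: "GA k n R cl zf u (YV i) \<Longrightarrow> u \<in> Xset n i"
  by (induct u) auto
lemma nbA_Z: "GA k n R cl zf u (ZV i) \<Longrightarrow> u \<in> Xset n i \<union> Xset n (i+1)"
  by (induct u) auto
lemma nbB_X: "GA k n (=) cl False u (XV i a) \<Longrightarrow>
   u \<in> (if cl i then insert (YV i) (Xset n i) else {}) \<union> {XV (i-1) a} \<union> {XV (i+1) a}"
  by (induct u) auto

lemma cliqK: "u \<in> insert (YV i) (Xset n i) \<Longrightarrow> v \<in> insert (YV i) (Xset n i) \<Longrightarrow> u \<noteq> v \<Longrightarrow> cl i \<Longrightarrow> i \<in> {1..k}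
  \<Longrightarrow> GA k n R cl zf u v"
  by auto
lemma cliqXZ: "u \<in> Xc k n j \<union> Zs k zf j' \<Longrightarrow> v \<in> Xc k n j \<union> Zs k zf j' \<Longrightarrow> u \<noteq> v \<Longrightarrow> j = j' \<or> j = j'+1
  \<Longrightarrow> GA k n R (\<lambda>_. True) zf u v"
  by (auto simp: Xc_def Zs_def split: if_splits)
lemma cliqZ: "u \<in> insert (ZV i) (Xset n i) \<Longrightarrow> v \<in> insert (ZV i) (Xset n i) \<Longrightarrow> u \<noteq> v \<Longrightarrow> zf \<Longrightarrow> i \<in> {1..k-1}
  \<Longrightarrow> GA k n R (\<lambda>_. True) zf u v"
  by auto
lemma cliqX: "u \<in> Xset n i \<Longrightarrow> v \<in> Xset n i \<Longrightarrow> u \<noteq> v \<Longrightarrow> i \<in> {1..k}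
  \<Longrightarrow> GA k n R (\<lambda>_. True) zf u v"
  by auto

lemma nb_helper:
  assumes E: "gedges G = {{u,v}|u v. GA k n R cl zf u v}"
    and self: "v \<in> S" and oth: "\<And>u. GA k n R cl zf u v \<Longrightarrow> u \<in> S"
  shows "closed_nbhd G v \<subseteq> S"
proof
  fix u assume "u \<in> closed_nbhd G v"
  hence "u = v \<or> GA k n R cl zf u v" by (rule nbhd_sub[OF E])
  thus "u \<in> S" using self oth by blast
qed

lemma astarA:
  assumes E: "gedges G = {{u,v}|u v. GA k n R (\<lambda>_. True) zf u v}"
    and V: "gverts G = Collect (GV k n (\<lambda>_. True) zf)" and kn: "k \<ge> 1" "n \<ge> 1"
  shows "alpha_star G \<le> 3"
proof (rule astar_gen[OF V])
  have "XV 1 1 \<in> gverts G" using V kn by simp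
  thus "gverts G \<noteq> {}" by blast
next
  fix v assume v: "GV k n (\<lambda>_. True) zf v"
  show "\<exists>A B C. closed_nbhd G v \<subseteq> A \<union> B \<union> C \<and> cliq G A \<and> cliq G B \<and> cliq G C"
  proof (cases v)
    case (XV i a)
    show ?thesis
    proof (intro exI conjI)
      show "closed_nbhd G v \<subseteq> insert (YV i) (Xset n i) \<union> (Xc k n (i-1) \<union> Zs k zf (i-1)) \<union> (Xc k n (i+1) \<union> Zs k zf i)"
        by (rule nb_helper[OF E]) (use v XV nbA_X in auto)
      show "cliq G (insert (YV i) (Xset n i))" by (rule cliqI[OF E], rule cliqK) (use v XV in auto)
      show "cliq G (Xc k n (i-1) \<union> Zs k zf (i-1))" by (rule cliqI[OF E], rule cliqXZ) auto
      show "cliq G (Xc k n (i+1) \<union> Zs k zf i)" by (rule cliqI[OF E], rule cliqXZ) auto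
    qed
  next
    case (YV i)
    show ?thesis
    proof (intro exI conjI)
      show "closed_nbhd G v \<subseteq> insert (YV i) (Xset n i) \<union> {} \<union> {}"
        by (rule nb_helper[OF E]) (use v YV nbA_Y in auto)
      show "cliq G (insert (YV i) (Xset n i))" by (rule cliqI[OF E], rule cliqK) (use v YV in auto)
    qed auto
  next
    case (ZV i)
    show ?thesis
    proof (intro exI conjI)
      show "closed_nbhd G v \<subseteq> insert (ZV i) (Xset n i) \<union> Xset n (i+1) \<union> {}"
        by (rule nb_helper[OF E]) (use v ZV nbA_Z in auto)
      show "cliq G (insert (ZV i) (Xset n i))" by (rule cliqI[OF E], rule cliqZ) (use v ZV in auto)
      show "cliq G (Xset n (i+1))" by (rule cliqI[OF E], rule cliqX) (use v ZV in auto)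
    qed auto
  qed
qed

lemma astarB:
  assumes E: "gedges G = {{u,v}|u v. GA k n (=) cl False u v}"
    and V: "gverts G = Collect (GV k n cl False)" and kn: "k \<ge> 1" "n \<ge> 1"
  shows "alpha_star G \<le> 3"
proof (rule astar_gen[OF V])
  have "XV 1 1 \<in> gverts G" using V kn by simp
  thus "gverts G \<noteq> {}" by blast
next
  fix v assume v: "GV k n cl False v"
  show "\<exists>A B C. closed_nbhd G v \<subseteq> A \<union> B \<union> C \<and> cliq G A \<and> cliq G B \<and> cliq G C"
  proof (cases v)
    case (XV i a)
    show ?thesis
    proof (intro exI conjI)
      show "closed_nbhd G v \<subseteq> insert v (if cl i then insert (YV i) (Xset n i) else {}) \<union> {XV (i-1) a} \<union> {XV (i+1) a}"
        by (rule nb_helper[OF E]) (use v XV nbB_X in blast)+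
      show "cliq G (insert v (if cl i then insert (YV i) (Xset n i) else {}))"
      proof (cases "cl i")
        case True
        hence "insert v (if cl i then insert (YV i) (Xset n i) else {}) = insert (YV i) (Xset n i)"
          using v XV by auto
        moreover have "cliq G (insert (YV i) (Xset n i))" by (rule cliqI[OF E], rule cliqK) (use v XV True in auto)
        ultimately show ?thesis by simp
      qed simp
    qed auto
  next
    case (YV i)
    show ?thesis
    proof (intro exI conjI)
      show "closed_nbhd G v \<subseteq> insert (YV i) (Xset n i) \<union> {} \<union> {}"
        by (rule nb_helper[OF E]) (use v YV nbA_Y in auto)
      show "cliq G (insert (YV i) (Xset n i))" by (rule cliqI[OF E], rule cliqK) (use v YV in auto)
    qed auto
  next
    case (ZV i)
    then show ?thesis using v by simp
  qed
qed




lemma atw_gen: "tree_decomp G N E B \<Longrightarrow> (\<forall>t\<in>N. alpha_on G (B t) \<le> 2) \<Longrightarrow> alpha_tw G \<le> 2"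
  unfolding alpha_tw_def by (rule Least_le) blast

lemma alpha2: "S \<subseteq> A \<union> C \<Longrightarrow> cliq G A \<Longrightarrow> cliq G C \<Longrightarrow> alpha_on G S \<le> 2"
proof (rule alpha_on_le)
  fix I assume "S \<subseteq> A \<union> C" "cliq G A" "cliq G C" "I \<subseteq> S" "indep G I"
  then show "card I \<le> 2" using card_le2[of I A C G] subset_trans by metis
qed

lemma Xc_X[simp]: "XV i a \<in> Xc k n j \<longleftrightarrow> j \<in> {1..k} \<and> i = j \<and> a \<in> {1..n}"
  by (auto simp: Xc_def)
lemma Xc_Y[simp]: "YV i \<notin> Xc k n j" "ZV i \<notin> Xc k n j"
  by (auto simp: Xc_def)
lemma Zs_Z[simp]: "ZV i \<in> Zs k zf j \<longleftrightarrow> zf \<and> j \<in> {1..k-1} \<and> i = j"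
  by (auto simp: Zs_def)
lemma Zs_X[simp]: "XV i a \<notin> Zs k zf j" "YV i \<notin> Zs k zf j"
  by (auto simp: Zs_def)

definition N1 :: "nat \<Rightarrow> nat set" where "N1 k = {0..2*k-2}"
definition p1 :: "nat \<Rightarrow> nat \<Rightarrow> nat" where "p1 k t = (if t \<le> k-2 then t-1 else min (t+1-k) (k-2))"
definition B1 :: "nat \<Rightarrow> nat \<Rightarrow> bool \<Rightarrow> nat \<Rightarrow> qv set" where
  "B1 k n zf t = (if t \<le> k-2 then Xc k n (t+1) \<union> Zs k zf (t+1) \<union> Xc k n (t+2)
                  else insert (YV (t+2-k)) (Xc k n (t+2-k)))"

lemma p1_ok: "k \<ge> 2 \<Longrightarrow> t \<in> N1 k \<Longrightarrow> t \<noteq> 0 \<Longrightarrow> p1 k t \<in> N1 k \<and> p1 k t < t"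
  unfolding N1_def p1_def by auto

lemma tree1: "k \<ge> 2 \<Longrightarrow> is_tree (N1 k) (ptE (N1 k) (p1 k))"
  by (rule ptree) (use p1_ok in \<open>auto simp: N1_def\<close>)

lemma mem1_X: "k \<ge> 2 \<Longrightarrow> t \<in> N1 k \<Longrightarrow> XV i a \<in> B1 k n zf t \<longleftrightarrow>
   a \<in> {1..n} \<and> i \<in> {1..k} \<and> (if t \<le> k-2 then (i = t+1 \<or> i = t+2) else i = t+2-k)"
  unfolding B1_def N1_def by auto
lemma mem1_Y: "k \<ge> 2 \<Longrightarrow> t \<in> N1 k \<Longrightarrow> YV i \<in> B1 k n zf t \<longleftrightarrow> \<not> t \<le> k-2 \<and> i = t+2-k"
  unfolding B1_def N1_def by auto
lemma mem1_Z: "k \<ge> 2 \<Longrightarrow> t \<in> N1 k \<Longrightarrow> ZV i \<in> B1 k n zf t \<longleftrightarrow> t \<le> k-2 \<and> zf \<and> i = t+1"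
  unfolding B1_def N1_def by auto


lemma cliqXc: "u \<in> Xc k n j \<Longrightarrow> v \<in> Xc k n j \<Longrightarrow> u \<noteq> v \<Longrightarrow> GA k n R (\<lambda>_. True) zf u v"
  by (auto simp: Xc_def split: if_splits)
lemma cliqKc: "u \<in> insert (YV i) (Xc k n i) \<Longrightarrow> v \<in> insert (YV i) (Xc k n i) \<Longrightarrow> u \<noteq> v \<Longrightarrow> i \<in> {1..k}
  \<Longrightarrow> GA k n R (\<lambda>_. True) zf u v"
  by (auto simp: Xc_def split: if_splits)

lemma edge1_xx: assumes g: "GA k n R (\<lambda>_. True) zf (XV i a) (XV i' b)" and k: "k \<ge> 2"
  shows "\<exists>t\<in>N1 k. XV i a \<in> B1 k n zf t \<and> XV i' b \<in> B1 k n zf t"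
proof -
  have r: "i \<in> {1..k}" "i' \<in> {1..k}" "a \<in> {1..n}" "b \<in> {1..n}" using g by auto
  have "i = i' \<or> i' = i+1 \<or> i = i'+1" using g by auto
  then consider "i = i'" | "i' = i+1" | "i = i'+1" by blast
  then show ?thesis
  proof cases
    case 1 show ?thesis using r 1 k by (intro bexI[of _ "i+k-2"]) (auto simp: mem1_X N1_def)
  next
    case 2 show ?thesis using r 2 k by (intro bexI[of _ "i-1"]) (auto simp: mem1_X N1_def)
  next
    case 3 show ?thesis using r 3 k by (intro bexI[of _ "i'-1"]) (auto simp: mem1_X N1_def)
  qed
qed
lemma edge1_xy: assumes g: "GA k n R (\<lambda>_. True) zf (XV i a) (YV i')" and k: "k \<ge> 2"
  shows "\<exists>t\<in>N1 k. XV i a \<in> B1 k n zf t \<and> YV i' \<in> B1 k n zf t"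
  using g k by (intro bexI[of _ "i+k-2"]) (auto simp: mem1_X mem1_Y N1_def)
lemma edge1_xz: assumes g: "GA k n R (\<lambda>_. True) zf (XV i a) (ZV i')" and k: "k \<ge> 2"
  shows "\<exists>t\<in>N1 k. XV i a \<in> B1 k n zf t \<and> ZV i' \<in> B1 k n zf t"
  using g k by (intro bexI[of _ "i'-1"]) (auto simp: mem1_X mem1_Z N1_def)

lemma edge1: assumes g: "GA k n R (\<lambda>_. True) zf u v" and k: "k \<ge> 2"
  shows "\<exists>t\<in>N1 k. u \<in> B1 k n zf t \<and> v \<in> B1 k n zf t"
proof -
  have "GA k n R (\<lambda>_. True) zf u v \<longrightarrow> (\<exists>t\<in>N1 k. u \<in> B1 k n zf t \<and> v \<in> B1 k n zf t)"
    apply (induct u; induct v)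
    apply (simp_all only: GA.simps(6-9) simp_thms)
    apply (use edge1_xx[OF _ k] edge1_xy[OF _ k] edge1_xz[OF _ k] GA_sym in metis)+
    done
  thus ?thesis using g by blast
qed


lemma sub1: assumes k: "k \<ge> 2" and v: "GV k n (\<lambda>_. True) zf v"
  shows "connected_on {t\<in>N1 k. v \<in> B1 k n zf t} (ptE (N1 k) (p1 k))"
proof (cases v)
  case (XV i a)
  have i: "i \<in> {1..k}" "a \<in> {1..n}" using v XV by auto
  show ?thesis unfolding XV
  proof (rule psub[where r="i-2"])
    show "\<And>t. t \<in> N1 k \<Longrightarrow> t \<noteq> 0 \<Longrightarrow> p1 k t \<in> N1 k \<and> p1 k t < t" using p1_ok k by blast
    show "i - 2 \<in> N1 k" using i k by (auto simp: N1_def)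
    show "XV i a \<in> B1 k n zf (i-2)" using i k by (subst mem1_X) (auto simp: N1_def)
  next
    fix t assume t: "t \<in> N1 k" "XV i a \<in> B1 k n zf t" "t \<noteq> i - 2"
    have pt: "p1 k t \<in> N1 k" if "t \<noteq> 0" using p1_ok k t that by blast
    have c: "(if t \<le> k-2 then (i = t+1 \<or> i = t+2) else i = t+2-k)" using t(1,2) k mem1_X by blast
    show "t \<noteq> 0 \<and> XV i a \<in> B1 k n zf (p1 k t)"
    proof (cases "t \<le> k-2")
      case True
      with c t(3) have ti: "i = t+1" "t \<noteq> 0" by auto
      have "p1 k t = t - 1" "t - 1 \<le> k - 2" using True by (auto simp: p1_def)
      moreover have "i = (t-1) + 2" using ti by simp
      ultimately show ?thesis using ti(2) mem1_X[OF k pt[OF ti(2)]] i by simp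
    next
      case False
      with c have ti: "i = t+2-k" "t \<noteq> 0" "t \<ge> k - 1" by auto
      have p: "p1 k t = min (t+1-k) (k-2)" using False by (simp add: p1_def)
      have "p1 k t \<le> k - 2 \<and> (i = p1 k t + 1 \<or> i = p1 k t + 2)"
        unfolding p using ti k i by (simp add: min_def; arith)
      thus ?thesis using ti(2) mem1_X[OF k pt[OF ti(2)]] i by simp
    qed
  qed
next
  case (YV i)
  have i: "i \<in> {1..k}" using v YV by auto
  show ?thesis unfolding YV
  proof (rule psub[where r="i+k-2"])
    show "\<And>t. t \<in> N1 k \<Longrightarrow> t \<noteq> 0 \<Longrightarrow> p1 k t \<in> N1 k \<and> p1 k t < t" using p1_ok k by blast
    show "i+k-2 \<in> N1 k" using i k by (auto simp: N1_def)
    show "YV i \<in> B1 k n zf (i+k-2)" using i k by (subst mem1_Y) (auto simp: N1_def)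
  next
    fix t assume t: "t \<in> N1 k" "YV i \<in> B1 k n zf t" "t \<noteq> i+k-2"
    then show "t \<noteq> 0 \<and> YV i \<in> B1 k n zf (p1 k t)" using mem1_Y[OF k t(1)] by auto
  qed
next
  case (ZV i)
  have i: "i \<in> {1..k-1}" "zf" using v ZV by auto
  show ?thesis unfolding ZV
  proof (rule psub[where r="i-1"])
    show "\<And>t. t \<in> N1 k \<Longrightarrow> t \<noteq> 0 \<Longrightarrow> p1 k t \<in> N1 k \<and> p1 k t < t" using p1_ok k by blast
    show "i-1 \<in> N1 k" using i k by (auto simp: N1_def)
    show "ZV i \<in> B1 k n zf (i-1)" using i k by (subst mem1_Z) (auto simp: N1_def)
  next
    fix t assume t: "t \<in> N1 k" "ZV i \<in> B1 k n zf t" "t \<noteq> i-1"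
    then show "t \<noteq> 0 \<and> ZV i \<in> B1 k n zf (p1 k t)" using mem1_Z[OF k t(1)] by auto
  qed
qed

lemma atwA:
  assumes E: "gedges G = {{u,v}|u v. GA k n R (\<lambda>_. True) zf u v}"
    and V: "gverts G = Collect (GV k n (\<lambda>_. True) zf)" and k: "k \<ge> 2"
  shows "alpha_tw G \<le> 2"
proof (rule atw_gen[of G "N1 k" "ptE (N1 k) (p1 k)" "B1 k n zf"])
  show "tree_decomp G (N1 k) (ptE (N1 k) (p1 k)) (B1 k n zf)"
    unfolding tree_decomp_def
  proof (intro conjI ballI)
    show "is_tree (N1 k) (ptE (N1 k) (p1 k))" using tree1 k .
  next
    fix t assume t: "t \<in> N1 k"
    show "B1 k n zf t \<subseteq> gverts G"
    proof
      fix x assume x: "x \<in> B1 k n zf t"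
      show "x \<in> gverts G" unfolding V
        using x mem1_X[OF k t] mem1_Y[OF k t] mem1_Z[OF k t] t k
        by (cases x) (auto simp: N1_def)
    qed
  next
    fix v assume "v \<in> gverts G"
    hence v: "GV k n (\<lambda>_. True) zf v" using V by simp
    show "\<exists>t\<in>N1 k. v \<in> B1 k n zf t"
    proof (cases v)
      case (XV i a) thus ?thesis using v k by (intro bexI[of _ "i+k-2"]) (auto simp: mem1_X N1_def)
    next
      case (YV i) thus ?thesis using v k by (intro bexI[of _ "i+k-2"]) (auto simp: mem1_Y N1_def)
    next
      case (ZV i) thus ?thesis using v k by (intro bexI[of _ "i-1"]) (auto simp: mem1_Z N1_def)
    qed
  next
    fix e assume "e \<in> gedges G"
    then obtain u v where e: "e = {u,v}" "GA k n R (\<lambda>_. True) zf u v" using E by blast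
    then show "\<exists>t\<in>N1 k. e \<subseteq> B1 k n zf t" using edge1[OF e(2) k] by auto
  next
    fix v assume "v \<in> gverts G"
    hence v: "GV k n (\<lambda>_. True) zf v" using V by simp
    show "connected_on {t \<in> N1 k. v \<in> B1 k n zf t} (ptE (N1 k) (p1 k))" by (rule sub1[OF k v])
  qed
next
  show "\<forall>t\<in>N1 k. alpha_on G (B1 k n zf t) \<le> 2"
  proof
    fix t assume t: "t \<in> N1 k"
    show "alpha_on G (B1 k n zf t) \<le> 2"
    proof (cases "t \<le> k-2")
      case True
      hence "B1 k n zf t = (Xc k n (t+1) \<union> Zs k zf (t+1)) \<union> Xc k n (t+2)" by (simp add: B1_def)
      moreover have "cliq G (Xc k n (t+1) \<union> Zs k zf (t+1))" by (rule cliqI[OF E], rule cliqXZ) auto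
      moreover have "cliq G (Xc k n (t+2))" by (rule cliqI[OF E], rule cliqXc) auto
      ultimately show ?thesis using alpha2 by (metis order_refl)
    next
      case False
      hence "B1 k n zf t = insert (YV (t+2-k)) (Xc k n (t+2-k)) \<union> {}" by (simp add: B1_def)
      moreover have "t+2-k \<in> {1..k}" using False t k by (auto simp: N1_def)
      hence "cliq G (insert (YV (t+2-k)) (Xc k n (t+2-k)))" by (intro cliqI[OF E] cliqKc) auto
      ultimately show ?thesis using alpha2 cliq_empty by (metis order_refl)
    qed
  qed
qed




definition Oc :: "nat \<Rightarrow> nat \<Rightarrow> nat \<Rightarrow> qv set" where
  "Oc k n i = (if odd i \<and> i \<le> k then insert (YV i) (Xset n i) else {})"
definition code :: "nat \<Rightarrow> nat \<Rightarrow> nat \<Rightarrow> nat \<Rightarrow> nat" where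
  "code k n i j = k - 1 + (i-1)*n + (j-1)"
definition di :: "nat \<Rightarrow> nat \<Rightarrow> nat \<Rightarrow> nat" where "di k n t = (t - (k-1)) div n + 1"
definition dj :: "nat \<Rightarrow> nat \<Rightarrow> nat \<Rightarrow> nat" where "dj k n t = (t - (k-1)) mod n + 1"
definition N2 :: "nat \<Rightarrow> nat \<Rightarrow> nat set" where "N2 k n = {0..k-2+k*n}"
definition p2 :: "nat \<Rightarrow> nat \<Rightarrow> nat \<Rightarrow> nat" where
  "p2 k n t = (if t \<le> k-2 then t-1 else di k n t - 2)"
definition LB :: "nat \<Rightarrow> nat \<Rightarrow> nat \<Rightarrow> qv set" where
  "LB k i j = (if even i then {XV i j, XV (i-1) j} \<union> (if i+1 \<le> k then {XV (i+1) j} else {}) else {})"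
definition B2 :: "nat \<Rightarrow> nat \<Rightarrow> nat \<Rightarrow> qv set" where
  "B2 k n t = (if t \<le> k-2 then Oc k n (t+1) \<union> Oc k n (t+2) \<union> Oc k n (t+3) else LB k (di k n t) (dj k n t))"

lemma code_dec:
  assumes "i \<in> {1..k}" "j \<in> {1..n}" "k \<ge> 2"
  shows "di k n (code k n i j) = i" "dj k n (code k n i j) = j" "code k n i j \<in> N2 k n" "\<not> code k n i j \<le> k - 2"
proof -
  have e: "code k n i j - (k-1) = (i-1)*n + (j-1)" unfolding code_def by simp
  have jn: "j - 1 < n" using assms by auto
  have d: "((i-1)*n + (j-1)) div n = i - 1" using jn by simp
  have m: "((i-1)*n + (j-1)) mod n = j - 1" using jn by simp
  show "di k n (code k n i j) = i" unfolding di_def e d using assms by simp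
  show "dj k n (code k n i j) = j" unfolding dj_def e m using assms by simp
  have "(i-1)*n \<le> (k-1)*n" using assms by (intro mult_le_mono1) auto
  moreover have "j - 1 \<le> n - 1" using assms by auto
  ultimately have "(i-1)*n + (j-1) \<le> (k-1)*n + (n - 1)" by (rule add_le_mono)
  also have "\<dots> = k*n - 1" using assms by (cases k) (auto simp: algebra_simps)
  finally have h: "(i-1)*n + (j-1) \<le> k*n - 1" .
  have kn: "k*n \<ge> 2" using assms by (metis atLeastAtMost_iff le_trans mult_le_mono nat_mult_1_right)
  show "code k n i j \<in> N2 k n" unfolding code_def N2_def atLeastAtMost_iff using h kn assms(3) by arith
  show "\<not> code k n i j \<le> k - 2" unfolding code_def using assms by auto
qed

lemma dec:
  assumes "t \<in> N2 k n" "\<not> t \<le> k - 2" "k \<ge> 2" "n \<ge> 1"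
  shows "di k n t \<in> {1..k}" "dj k n t \<in> {1..n}" "t = code k n (di k n t) (dj k n t)"
proof -
  let ?s = "t - (k-1)"
  have s: "?s \<le> k*n - 1" using assms unfolding N2_def by auto
  have "?s div n < k"
  proof -
    have "k*n \<ge> 1" using assms by simp
    hence "?s < k*n" using s by linarith
    thus ?thesis by (simp add: less_mult_imp_div_less)
  qed
  thus "di k n t \<in> {1..k}" unfolding di_def atLeastAtMost_iff by linarith
  have "?s mod n < n" using assms by simp
  thus "dj k n t \<in> {1..n}" unfolding dj_def atLeastAtMost_iff by linarith
  have "?s = ?s div n * n + ?s mod n" by simp
  thus "t = code k n (di k n t) (dj k n t)" unfolding code_def di_def dj_def using assms by simp
qed


lemma Oc_X[simp]: "XV i a \<in> Oc k n j \<longleftrightarrow> odd j \<and> j \<le> k \<and> i = j \<and> a \<in> {1..n}"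
  by (auto simp: Oc_def)
lemma Oc_Y[simp]: "YV i \<in> Oc k n j \<longleftrightarrow> odd j \<and> j \<le> k \<and> i = j"
  by (auto simp: Oc_def)
lemma Oc_Z[simp]: "ZV i \<notin> Oc k n j"
  by (auto simp: Oc_def)
lemma LB_X[simp]: "XV i a \<in> LB k i' j \<longleftrightarrow> even i' \<and> a = j \<and> (i = i' \<or> i = i'-1 \<or> (i = i'+1 \<and> i'+1 \<le> k))"
  by (auto simp: LB_def)
lemma LB_Y[simp]: "YV i \<notin> LB k i' j" "ZV i \<notin> LB k i' j"
  by (auto simp: LB_def)

lemma B2s: "t \<le> k-2 \<Longrightarrow> B2 k n t = Oc k n (t+1) \<union> Oc k n (t+2) \<union> Oc k n (t+3)"
  by (simp add: B2_def)
lemma B2l: "\<not> t \<le> k-2 \<Longrightarrow> B2 k n t = LB k (di k n t) (dj k n t)"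
  by (simp add: B2_def)

lemma p2_ok: assumes "k \<ge> 2" "n \<ge> 1" "t \<in> N2 k n" "t \<noteq> 0" shows "p2 k n t \<in> N2 k n \<and> p2 k n t < t"
proof (cases "t \<le> k-2")
  case True thus ?thesis using assms by (auto simp: p2_def N2_def)
next
  case False
  have "di k n t \<in> {1..k}" using dec(1)[OF assms(3) False assms(1,2)] .
  hence "p2 k n t \<le> k - 2" using False by (simp add: p2_def diff_le_mono)
  thus ?thesis using False by (auto simp: N2_def)
qed

lemma tree2: "k \<ge> 2 \<Longrightarrow> n \<ge> 1 \<Longrightarrow> is_tree (N2 k n) (ptE (N2 k n) (p2 k n))"
  by (rule ptree) (use p2_ok in \<open>auto simp: N2_def\<close>)

lemma leafX: assumes "t \<in> N2 k n" "\<not> t \<le> k-2" "k \<ge> 2" "n \<ge> 1" "XV i a \<in> B2 k n t"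
  shows "\<exists>i'. i' \<in> {1..k} \<and> even i' \<and> a \<in> {1..n} \<and> t = code k n i' a \<and> p2 k n t = i' - 2 \<and>
      (i = i' \<or> i = i'-1 \<or> (i = i'+1 \<and> i'+1 \<le> k))"
proof -
  note d = dec[OF assms(1-4)]
  have "XV i a \<in> LB k (di k n t) (dj k n t)" using assms(5) B2l[OF assms(2)] by simp
  hence h: "even (di k n t)" "a = dj k n t" "i = di k n t \<or> i = di k n t - 1 \<or> (i = di k n t + 1 \<and> di k n t + 1 \<le> k)"
    by auto
  show ?thesis
    apply (rule exI[of _ "di k n t"])
    using d h assms(2) by (simp add: p2_def)
qed

lemma cliqO: "u \<in> Oc k n i \<Longrightarrow> v \<in> Oc k n i \<Longrightarrow> u \<noteq> v \<Longrightarrow> GA k n (=) odd False u v"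
  by (auto simp: Oc_def split: if_splits; presburger)


lemma spine_step: "(t::nat) \<le> k-2 \<Longrightarrow> (i = t+1 \<or> i = t+2 \<or> i = t+3) \<Longrightarrow> t \<noteq> i-3 \<Longrightarrow>
   t \<noteq> 0 \<and> t - 1 \<le> k-2 \<and> (i = (t-1)+1 \<or> i = (t-1)+2 \<or> i = (t-1)+3)"
  by arith

lemma spine_r: "odd (i::nat) \<Longrightarrow> i \<in> {1..k} \<Longrightarrow> k \<ge> 2 \<Longrightarrow> i - 3 \<le> k - 2 \<and> (i = (i-3)+1 \<or> i = (i-3)+2 \<or> i = (i-3)+3)"
proof -
  assume a: "odd i" "i \<in> {1..k}" "k \<ge> 2"
  have "i = 1 \<or> i \<ge> 3" using a(1) by presburger
  thus ?thesis using a by auto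
qed

lemma sub2: assumes k: "k \<ge> 2" and n: "n \<ge> 1" and v: "GV k n odd False v"
  shows "connected_on {t\<in>N2 k n. v \<in> B2 k n t} (ptE (N2 k n) (p2 k n))"
proof -
  have par: "\<And>t. t \<in> N2 k n \<Longrightarrow> t \<noteq> 0 \<Longrightarrow> p2 k n t \<in> N2 k n \<and> p2 k n t < t" using p2_ok k n by blast
  have sN: "\<And>t. t \<le> k - 2 \<Longrightarrow> t \<in> N2 k n" by (auto simp: N2_def)
  show ?thesis
  proof (cases v)
    case (XV i a)
    have i: "i \<in> {1..k}" "a \<in> {1..n}" using v XV by auto
    show ?thesis
    proof (cases "even i")
      case True
      note cd = code_dec[OF i k]
      show ?thesis unfolding XV
      proof (rule psub[OF par, where r="code k n i a"])
        show "code k n i a \<in> N2 k n" using cd by blast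
        show "XV i a \<in> B2 k n (code k n i a)" using cd True by (simp add: B2l)
      next
        fix t assume t: "t \<in> N2 k n" "XV i a \<in> B2 k n t" "t \<noteq> code k n i a"
        show "t \<noteq> 0 \<and> XV i a \<in> B2 k n (p2 k n t)"
        proof (cases "t \<le> k-2")
          case True
          have "odd i" using t(2) True by (auto simp: B2s)
          then show ?thesis using \<open>even i\<close> by simp
        next
          case False
          obtain i' where h: "i' \<in> {1..k}" "even i'" "t = code k n i' a"
              "i = i' \<or> i = i'-1 \<or> (i = i'+1 \<and> i'+1 \<le> k)"
            using leafX[OF t(1) False k n t(2)] by blast
          have "i = i'" using h(4) \<open>even i\<close> h(2) h(1) by (auto; presburger)
          then show ?thesis using t(3) h(3) by simp
        qed
      qed
    next
      case False
      note sr = spine_r[OF False i(1) k]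
      show ?thesis unfolding XV
      proof (rule psub[OF par, where r="i-3"])
        show "i-3 \<in> N2 k n" using sr sN by blast
        show "XV i a \<in> B2 k n (i-3)" using sr False i by (auto simp: B2s)
      next
        fix t assume t: "t \<in> N2 k n" "XV i a \<in> B2 k n t" "t \<noteq> i-3"
        show "t \<noteq> 0 \<and> XV i a \<in> B2 k n (p2 k n t)"
        proof (cases "t \<le> k-2")
          case True
          hence "i = t+1 \<or> i = t+2 \<or> i = t+3" using t(2) by (auto simp: B2s)
          note ss = spine_step[OF True this t(3)]
          have "p2 k n t = t - 1" using True by (simp add: p2_def)
          then show ?thesis using ss False i by (auto simp: B2s)
        next
          case tl: False
          obtain i' where h: "i' \<in> {1..k}" "even i'" "t = code k n i' a" "p2 k n t = i' - 2"
              "i = i' \<or> i = i'-1 \<or> (i = i'+1 \<and> i'+1 \<le> k)"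
            using leafX[OF t(1) tl k n t(2)] by blast
          have i2: "i' \<ge> 2" using h(1,2) by (auto; presburger)
          have "i = i'-1 \<or> i = i'+1" using h(5) False h(2) by auto
          hence "i' - 2 \<le> k - 2 \<and> (i = (i'-2)+1 \<or> i = (i'-2)+2 \<or> i = (i'-2)+3)"
            using i2 h(1) i h(5) by auto
          moreover have "t \<noteq> 0" using tl by auto
          ultimately show ?thesis using h(4) False i by (auto simp: B2s)
        qed
      qed
    qed
  next
    case (YV i)
    have i: "i \<in> {1..k}" "odd i" using v YV by auto
    note sr = spine_r[OF i(2) i(1) k]
    show ?thesis unfolding YV
    proof (rule psub[OF par, where r="i-3"])
      show "i-3 \<in> N2 k n" using sr sN by blast
      show "YV i \<in> B2 k n (i-3)" using sr i by (auto simp: B2s)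
    next
      fix t assume t: "t \<in> N2 k n" "YV i \<in> B2 k n t" "t \<noteq> i-3"
      show "t \<noteq> 0 \<and> YV i \<in> B2 k n (p2 k n t)"
      proof (cases "t \<le> k-2")
        case True
        hence "i = t+1 \<or> i = t+2 \<or> i = t+3" using t(2) by (auto simp: B2s)
        note ss = spine_step[OF True this t(3)]
        have "p2 k n t = t - 1" using True by (simp add: p2_def)
        then show ?thesis using ss i by (auto simp: B2s)
      next
        case False
        then show ?thesis using t(2) by (simp add: B2l)
      qed
    qed
  next
    case (ZV i)
    then show ?thesis using v by simp
  qed
qed


lemma spine_min: "(i::nat) \<in> {1..k} \<Longrightarrow> k \<ge> 2 \<Longrightarrow> min (i-1) (k-2) \<le> k-2 \<and>
   (i = min (i-1) (k-2) + 1 \<or> i = min (i-1) (k-2) + 2 \<or> i = min (i-1) (k-2) + 3)"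
  by (auto simp: min_def)

lemma cover_odd: assumes "odd i" "i \<in> {1..k}" "k \<ge> 2"
  shows "min (i-1) (k-2) \<in> N2 k n" "XV i a \<in> B2 k n (min (i-1) (k-2)) \<longleftrightarrow> a \<in> {1..n}"
    "YV i \<in> B2 k n (min (i-1) (k-2))"
  using spine_min[OF assms(2,3)] assms by (auto simp: B2s N2_def)

lemma cover_even: assumes "even i" "i \<in> {1..k}" "a \<in> {1..n}" "k \<ge> 2"
  shows "code k n i a \<in> N2 k n" "XV i a \<in> B2 k n (code k n i a)" "XV (i-1) a \<in> B2 k n (code k n i a)"
    "i + 1 \<le> k \<Longrightarrow> XV (i+1) a \<in> B2 k n (code k n i a)"
  using code_dec[OF assms(2,3,4)] assms by (auto simp: B2l)

lemma edge2_xx: assumes g: "GA k n (=) odd False (XV i a) (XV i' b)" and k: "k \<ge> 2"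
  shows "\<exists>t\<in>N2 k n. XV i a \<in> B2 k n t \<and> XV i' b \<in> B2 k n t"
proof -
  have r: "i \<in> {1..k}" "i' \<in> {1..k}" "a \<in> {1..n}" "b \<in> {1..n}" using g by auto
  have "(i = i' \<and> odd i) \<or> (i' = i+1 \<and> a = b) \<or> (i = i'+1 \<and> b = a)" using g by auto
  then consider "i = i'" "odd i" | "i' = i+1" "a = b" | "i = i'+1" "a = b" by blast
  then show ?thesis
  proof cases
    case 1 show ?thesis using cover_odd[OF 1(2) r(1) k] 1 r by blast
  next
    case 2
    show ?thesis
    proof (cases "even i")
      case True thus ?thesis using cover_even[OF True r(1) r(3) k] 2 r by auto
    next
      case False
      hence e: "even i'" using 2 by simp
      have "i' - 1 = i" using 2 by simp
      thus ?thesis using cover_even[OF e r(2) r(3) k] 2 r by (metis)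
    qed
  next
    case 3
    show ?thesis
    proof (cases "even i'")
      case True thus ?thesis using cover_even[OF True r(2) r(4) k] 3 r by auto
    next
      case False
      hence e: "even i" using 3 by simp
      have "i - 1 = i'" using 3 by simp
      thus ?thesis using cover_even[OF e r(1) r(3) k] 3 r by (metis)
    qed
  qed
qed

lemma edge2_xy: assumes g: "GA k n (=) odd False (XV i a) (YV i')" and k: "k \<ge> 2"
  shows "\<exists>t\<in>N2 k n. XV i a \<in> B2 k n t \<and> YV i' \<in> B2 k n t"
proof -
  have "i' = i" "odd i" "i \<in> {1..k}" "a \<in> {1..n}" using g by auto
  thus ?thesis using cover_odd[where i=i and k=k and n=n] k by blast
qed

lemma edge2: assumes g: "GA k n (=) odd False u v" and k: "k \<ge> 2"
  shows "\<exists>t\<in>N2 k n. u \<in> B2 k n t \<and> v \<in> B2 k n t"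
proof -
  have "GA k n (=) odd False u v \<longrightarrow> (\<exists>t\<in>N2 k n. u \<in> B2 k n t \<and> v \<in> B2 k n t)"
    apply (induct u; induct v)
    apply (simp_all only: GA.simps(4-9) simp_thms)
    apply (use edge2_xx[OF _ k] edge2_xy[OF _ k] GA_sym in metis)+
    done
  thus ?thesis using g by blast
qed

lemma atwB:
  assumes E: "gedges G = {{u,v}|u v. GA k n (=) odd False u v}"
    and V: "gverts G = Collect (GV k n odd False)" and k: "k \<ge> 2" and n: "n \<ge> 1"
  shows "alpha_tw G \<le> 2"
proof (rule atw_gen[of G "N2 k n" "ptE (N2 k n) (p2 k n)" "B2 k n"])
  show "tree_decomp G (N2 k n) (ptE (N2 k n) (p2 k n)) (B2 k n)"
    unfolding tree_decomp_def
  proof (intro conjI ballI)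
    show "is_tree (N2 k n) (ptE (N2 k n) (p2 k n))" using tree2 k n .
  next
    fix t assume t: "t \<in> N2 k n"
    show "B2 k n t \<subseteq> gverts G"
    proof
      fix x assume x: "x \<in> B2 k n t"
      show "x \<in> gverts G" unfolding V
      proof (cases "t \<le> k-2")
        case True
        thus "x \<in> Collect (GV k n odd False)" using x
          by (cases x) (auto simp: B2s; presburger)+
      next
        case False
        note d = dec[OF t False k n]
        have "x \<in> LB k (di k n t) (dj k n t)" using x False by (simp add: B2l)
        moreover have "even (di k n t) \<Longrightarrow> di k n t \<ge> 2" using d(1) by (auto; presburger)
        ultimately show "x \<in> Collect (GV k n odd False)" using d
          by (cases x) auto
      qed
    qed
  next
    fix v assume "v \<in> gverts G"
    hence v: "GV k n odd False v" using V by simp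
    show "\<exists>t\<in>N2 k n. v \<in> B2 k n t"
    proof (cases v)
      case (XV i a)
      have i: "i \<in> {1..k}" "a \<in> {1..n}" using v XV by auto
      show ?thesis
      proof (cases "even i")
        case True thus ?thesis using cover_even[OF True i k] XV by blast
      next
        case False thus ?thesis using cover_odd[OF False i(1) k] XV i by blast
      qed
    next
      case (YV i) thus ?thesis using v cover_odd[where i=i and k=k and n=n] k by auto
    next
      case (ZV i) thus ?thesis using v by simp
    qed
  next
    fix e assume "e \<in> gedges G"
    then obtain u v where e: "e = {u,v}" "GA k n (=) odd False u v" using E by blast
    then show "\<exists>t\<in>N2 k n. e \<subseteq> B2 k n t" using edge2[OF e(2) k] by auto
  next
    fix v assume "v \<in> gverts G"
    hence v: "GV k n odd False v" using V by simp
    show "connected_on {t \<in> N2 k n. v \<in> B2 k n t} (ptE (N2 k n) (p2 k n))" by (rule sub2[OF k n v])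
  qed
next
  show "\<forall>t\<in>N2 k n. alpha_on G (B2 k n t) \<le> 2"
  proof
    fix t assume t: "t \<in> N2 k n"
    have cO: "cliq G (Oc k n j)" for j by (rule cliqI[OF E], rule cliqO) auto
    show "alpha_on G (B2 k n t) \<le> 2"
    proof (cases "t \<le> k-2")
      case True
      show ?thesis
      proof (cases "even t")
        case True
        hence "Oc k n (t+2) = {}" by (simp add: Oc_def)
        hence "B2 k n t \<subseteq> Oc k n (t+1) \<union> Oc k n (t+3)" using \<open>t \<le> k-2\<close> by (auto simp: B2s)
        thus ?thesis using alpha2 cO by blast
      next
        case False
        hence "Oc k n (t+1) = {}" "Oc k n (t+3) = {}" by (simp_all add: Oc_def)
        hence "B2 k n t \<subseteq> Oc k n (t+2) \<union> {}" using \<open>t \<le> k-2\<close> by (auto simp: B2s)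
        thus ?thesis using alpha2 cO cliq_empty by blast
      qed
    next
      case False
      note d = dec[OF t False k n]
      let ?i = "di k n t" and ?j = "dj k n t"
      show ?thesis
      proof (cases "even ?i")
        case True
        have i2: "?i \<ge> 2" using d(1) True by (auto; presburger)
        have "B2 k n t \<subseteq> {XV ?i ?j, XV (?i-1) ?j} \<union> (if ?i+1 \<le> k then {XV (?i+1) ?j} else {})"
          using False True by (simp add: B2l LB_def)
        moreover have "cliq G {XV ?i ?j, XV (?i-1) ?j}"
        proof (rule cliqI[OF E])
          fix u v assume "u \<in> {XV ?i ?j, XV (?i-1) ?j}" "v \<in> {XV ?i ?j, XV (?i-1) ?j}" "u \<noteq> v"
          thus "GA k n (=) odd False u v" using d i2 by auto
        qed
        moreover have "cliq G (if ?i+1 \<le> k then {XV (?i+1) ?j} else {})" by simp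
        ultimately show ?thesis using alpha2 by blast
      next
        case odd: False
        have "B2 k n t = {} \<union> {}" using False odd by (simp add: B2l LB_def)
        thus ?thesis using alpha2 cliq_empty by (metis order_refl)
      qed
    qed
  qed
qed



theorem lemma8p5:
  fixes n :: nat and Q :: "qv graph"
  assumes "n \<ge> 3"
    and "Q \<in> {Q_MKI n n, Q_MKK n n, Q_AKK n n, Q_HKK n n}"
  shows "alpha_tw Q \<le> 2 \<and> alpha_star Q \<le> 3"
proof -
  have k: "n \<ge> 2" "n \<ge> 1" using assms(1) by auto
  consider "Q = Q_MKI n n" | "Q = Q_MKK n n" | "Q = Q_AKK n n" | "Q = Q_HKK n n" using assms(2) by blast
  then show ?thesis
  proof cases
    case 1
    show ?thesis unfolding 1
      using atwB[OF MKI_E MKI_V[OF k(1)] k] astarB[OF MKI_E MKI_V[OF k(1)]] k by simp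
  next
    case 2
    show ?thesis unfolding 2
      using atwA[OF MKK_E MKK_V k(1)] astarA[OF MKK_E MKK_V] k by simp
  next
    case 3
    show ?thesis unfolding 3
      using atwA[OF AKK_E AKK_V k(1)] astarA[OF AKK_E AKK_V] k by simp
  next
    case 4
    show ?thesis unfolding 4
      using atwA[OF HKK_E HKK_V k(1)] astarA[OF HKK_E HKK_V] k by simp
  qed
qed

end
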